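(* There is an absolute constant $c>0$ such that for all positive integers $n,S,G$ there is a formula on the $n$ input variables $x_1,\dots,x_n$ with formula size at most $S$ and at most $G$ gates, computing a function $f$ with $Q(f)\ge c\min\{n,\sqrt{S},n^{1/2}G^{1/4}\}$.
   Context: A formula on input variables $x_1,\dots,x_n$ is a rooted tree whose leaves are labeled by input variables (the same variable may label many leaves) and whose internal vertices are \textsc{not} gates (fanin 1) or unbounded-fanin \textsc{and}/\textsc{or} gates. The formula size is the number of leaves; the gate count is the number of \textsc{and} and \textsc{or} gates. $Q(f)$ denotes bounded-error quantum query complexity: the minimum number of queries to the oracle $|i,b\rangle\mapsto|i,b\oplus x_i\rangle$ by a quantum algorithm outputting $f(x)$ with probability at least $2/3$ on every input. *)

theory Defs
  imports Complex_Main
begin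

text \<open>Variables are indexed from 0: input variable x_(i+1) is Var i.
  Inputs are x :: nat \<Rightarrow> bool; only the values x 0, ..., x (n-1) matter.\<close>

datatype formula = Var nat | Neg formula | AndG "formula list" | OrG "formula list"

fun eval :: "formula \<Rightarrow> (nat \<Rightarrow> bool) \<Rightarrow> bool" where
  "eval (Var i) x = x i"
| "eval (Neg \<phi>) x = (\<not> eval \<phi> x)"
| "eval (AndG \<phi>s) x = (\<forall>\<psi>\<in>set \<phi>s. eval \<psi> x)"
| "eval (OrG \<phi>s) x = (\<exists>\<psi>\<in>set \<phi>s. eval \<psi> x)"

text \<open>Formula size = number of leaves.\<close>
fun leaves :: "formula \<Rightarrow> nat" where
  "leaves (Var i) = 1"
| "leaves (Neg \<phi>) = leaves \<phi>"
| "leaves (AndG \<phi>s) = sum_list (map leaves \<phi>s)"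
| "leaves (OrG \<phi>s) = sum_list (map leaves \<phi>s)"

text \<open>Gate count = number of AND and OR gates.\<close>
fun gates :: "formula \<Rightarrow> nat" where
  "gates (Var i) = 0"
| "gates (Neg \<phi>) = gates \<phi>"
| "gates (AndG \<phi>s) = Suc (sum_list (map gates \<phi>s))"
| "gates (OrG \<phi>s) = Suc (sum_list (map gates \<phi>s))"

fun vars :: "formula \<Rightarrow> nat set" where
  "vars (Var i) = {i}"
| "vars (Neg \<phi>) = vars \<phi>"
| "vars (AndG \<phi>s) = (\<Union>\<psi>\<in>set \<phi>s. vars \<psi>)"
| "vars (OrG \<phi>s) = (\<Union>\<psi>\<in>set \<phi>s. vars \<psi>)"

text \<open>Computational basis states |i, b, w> with query register i < n, answer bit b,
  and workspace w < m. States are functions from basis labels to amplitudes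
  (zero outside the basis set); operators are matrices indexed by basis labels.\<close>

type_synonym qbasis = "nat \<times> bool \<times> nat"
type_synonym qstate = "qbasis \<Rightarrow> complex"
type_synonym qop = "qbasis \<Rightarrow> qbasis \<Rightarrow> complex"

definition basis_set :: "nat \<Rightarrow> nat \<Rightarrow> qbasis set" where
  "basis_set n m = {..<n} \<times> UNIV \<times> {..<m}"

definition unitary_on :: "qbasis set \<Rightarrow> qop \<Rightarrow> bool" where
  "unitary_on B U \<longleftrightarrow>
     (\<forall>a\<in>B. \<forall>b\<in>B. (\<Sum>c\<in>B. cnj (U c a) * U c b) = (if a = b then 1 else 0))"

definition apply_op :: "qbasis set \<Rightarrow> qop \<Rightarrow> qstate \<Rightarrow> qstate" where
  "apply_op B U v = (\<lambda>a. if a \<in> B then (\<Sum>b\<in>B. U a b * v b) else 0)"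

definition query_op :: "(nat \<Rightarrow> bool) \<Rightarrow> qstate \<Rightarrow> qstate" where
  "query_op x v = (\<lambda>(i, b, w). v (i, b \<noteq> x i, w))"

definition init_state :: qstate where
  "init_state = (\<lambda>a. if a = (0, False, 0) then 1 else 0)"

text \<open>Running U_0, O_x, U_1, O_x, ..., O_x, U_T: the number of queries is length Us - 1.\<close>
fun run :: "qbasis set \<Rightarrow> (nat \<Rightarrow> bool) \<Rightarrow> qop list \<Rightarrow> qstate" where
  "run B x [] = init_state"
| "run B x (U # Us) = fold (\<lambda>V v. apply_op B V (query_op x v)) Us (apply_op B U init_state)"

text \<open>A T-query algorithm with workspace size m (m > 0), unitaries Us (T+1 of them), and
  a final computational-basis measurement whose outcome is post-processed by the accepting set
  Acc (output 1 iff the observed basis label lies in Acc).\<close>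
definition computes :: "nat \<Rightarrow> nat \<Rightarrow> qop list \<Rightarrow> qbasis set \<Rightarrow> ((nat \<Rightarrow> bool) \<Rightarrow> bool) \<Rightarrow> bool" where
  "computes n m Us Acc f \<longleftrightarrow>
     0 < m \<and> Us \<noteq> [] \<and> (\<forall>U\<in>set Us. unitary_on (basis_set n m) U) \<and>
     (\<forall>x. let \<psi> = run (basis_set n m) x Us in
        (if f x then (\<Sum>a\<in>basis_set n m \<inter> Acc. (cmod (\<psi> a))\<^sup>2)
                else (\<Sum>a\<in>basis_set n m - Acc. (cmod (\<psi> a))\<^sup>2)) \<ge> 2/3)"

definition Q :: "nat \<Rightarrow> ((nat \<Rightarrow> bool) \<Rightarrow> bool) \<Rightarrow> nat" where
  "Q n f = Inf {T. \<exists>m Us Acc. computes n m Us Acc f \<and> T = length Us - 1}"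

end

theory Submission
  imports Defs
begin


definition ip :: "qbasis set \<Rightarrow> qstate \<Rightarrow> qstate \<Rightarrow> complex" where
  "ip B u v = (\<Sum>a\<in>B. cnj (u a) * v a)"

definition nrm :: "qbasis set \<Rightarrow> qstate \<Rightarrow> real" where
  "nrm B u = (\<Sum>a\<in>B. (cmod (u a))\<^sup>2)"

lemma finite_basis_set: "finite (basis_set n m)"
  unfolding basis_set_def by auto

lemma cnj_mult_self: "cnj z * z = complex_of_real ((cmod z)\<^sup>2)"
  by (metis complex_norm_square mult.commute)

lemma ip_self: "ip B u u = of_real (nrm B u)"
  unfolding ip_def nrm_def of_real_sum
  by (rule sum.cong) (simp_all only: cnj_mult_self)

lemma ip_unitary:
  assumes "finite B" "unitary_on B U"
  shows "ip B (apply_op B U u) (apply_op B U v) = ip B u v"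
proof -
  have "ip B (apply_op B U u) (apply_op B U v)
      = (\<Sum>a\<in>B. cnj (\<Sum>b\<in>B. U a b * u b) * (\<Sum>c\<in>B. U a c * v c))"
    unfolding ip_def apply_op_def by (rule sum.cong) auto
  also have "\<dots> = (\<Sum>a\<in>B. \<Sum>b\<in>B. \<Sum>c\<in>B. (cnj (u b) * v c) * (cnj (U a b) * U a c))"
    unfolding cnj_sum sum_product by (intro sum.cong refl) (simp add: mult_ac)
  also have "\<dots> = (\<Sum>b\<in>B. \<Sum>a\<in>B. \<Sum>c\<in>B. (cnj (u b) * v c) * (cnj (U a b) * U a c))"
    by (rule sum.swap)
  also have "\<dots> = (\<Sum>b\<in>B. \<Sum>c\<in>B. \<Sum>a\<in>B. (cnj (u b) * v c) * (cnj (U a b) * U a c))"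
    by (rule sum.cong[OF refl]) (rule sum.swap)
  also have "\<dots> = (\<Sum>b\<in>B. \<Sum>c\<in>B. (cnj (u b) * v c) * (if b = c then 1 else 0))"
    using assms(2) unfolding unitary_on_def
    by (intro sum.cong refl) (simp add: sum_distrib_left[symmetric])
  also have "\<dots> = ip B u v"
    unfolding ip_def using assms(1) by (simp add: if_distrib sum.delta cong: if_cong)
  finally show ?thesis .
qed

definition blk :: "nat \<Rightarrow> qstate \<Rightarrow> nat \<Rightarrow> real" where
  "blk m u i = (\<Sum>p\<in>(UNIV::bool set) \<times> {..<m}. (cmod (u (i, p)))\<^sup>2)"

lemma sum_basis_set:
  "(\<Sum>a\<in>basis_set n m. g a) = (\<Sum>i<n. \<Sum>p\<in>(UNIV::bool set) \<times> {..<m}. g (i, p))"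
  unfolding basis_set_def by (simp add: sum.cartesian_product)

lemma nrm_blk: "nrm (basis_set n m) u = (\<Sum>i<n. blk m u i)"
  unfolding nrm_def blk_def sum_basis_set ..

lemma blk_nonneg: "blk m u i \<ge> 0"
  unfolding blk_def by (intro sum_nonneg) auto

lemma bool_cancel[simp]: "((b = (\<not> c)) = (\<not> c)) = (b::bool)" by auto

lemma bool_cancel2[simp]: "((b = (\<not> c)) = c) = (\<not> b)" by auto

lemma query_op_simp: "query_op x v (i, b, w) = v (i, b \<noteq> x i, w)"
  unfolding query_op_def by simp

lemma ip_query:
  "ip (basis_set n m) (query_op x u) v = ip (basis_set n m) u (query_op x v)"
  unfolding ip_def
  apply (rule sum.reindex_bij_witness[where i="\<lambda>(i,b,w). (i, b \<noteq> x i, w)" and j="\<lambda>(i,b,w). (i, b \<noteq> x i, w)"])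
  by (auto simp: basis_set_def query_op_def)

lemma query_query: "query_op x (query_op x v) = v"
  unfolding query_op_def by auto

lemma nrm_query: "nrm (basis_set n m) (query_op x u) = nrm (basis_set n m) u"
proof -
  have "of_real (nrm (basis_set n m) (query_op x u)) = (of_real (nrm (basis_set n m) u) :: complex)"
    unfolding ip_self[symmetric] ip_query query_query ..
  then show ?thesis by simp
qed

lemma nrm_unitary:
  assumes "finite B" "unitary_on B U"
  shows "nrm B (apply_op B U u) = nrm B u"
proof -
  have "of_real (nrm B (apply_op B U u)) = (of_real (nrm B u) :: complex)"
    unfolding ip_self[symmetric] ip_unitary[OF assms] ..
  then show ?thesis by simp
qed

lemma blk_flip:
  "(\<Sum>p\<in>(UNIV::bool set) \<times> {..<m}. (cmod (v (i, \<not> fst p, snd p)))\<^sup>2) = blk m v i"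
  unfolding blk_def
  apply (rule sum.reindex_bij_witness[where i="\<lambda>(b,w). (\<not> b, w)" and j="\<lambda>(b,w). (\<not> b, w)"])
  by auto

lemma amgm: "(\<alpha>::real) > 0 \<Longrightarrow> a * b \<le> \<alpha> / 2 * a\<^sup>2 + b\<^sup>2 / (2 * \<alpha>)"
proof -
  assume "\<alpha> > 0"
  have "0 \<le> (\<alpha> * a - b)\<^sup>2" by simp
  then have "2 * \<alpha> * (a * b) \<le> \<alpha>\<^sup>2 * a\<^sup>2 + b\<^sup>2" by (simp add: power2_eq_square algebra_simps)
  then show ?thesis using \<open>\<alpha> > 0\<close> by (simp add: field_simps power2_eq_square)
qed

lemma query_drop:
  assumes i0: "i0 < n" and y: "y = x(i0 := \<not> x i0)" and al: "\<alpha> > 0"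
  shows "cmod (ip (basis_set n m) u v) - cmod (ip (basis_set n m) (query_op x u) (query_op y v))
         \<le> \<alpha> * blk m u i0 + (2 / \<alpha>) * blk m v i0"
proof -
  let ?B = "basis_set n m"
  let ?P = "(UNIV::bool set) \<times> {..<m}"
  define w where "w = query_op x (query_op y v)"
  have w1: "w (i, p) = v (i, p)" if "i \<noteq> i0" for i p
    using that y unfolding w_def query_op_def by (cases p) auto
  have w2: "w (i0, p) = v (i0, \<not> fst p, snd p)" for p
    using y unfolding w_def query_op_def by (cases p) auto
  have "ip ?B (query_op x u) (query_op y v) = ip ?B u w"
    unfolding w_def ip_query ..
  moreover have "ip ?B u w - ip ?B u v = (\<Sum>a\<in>?B. cnj (u a) * (w a - v a))"
    unfolding ip_def by (simp add: sum_subtractf algebra_simps)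
  moreover have "\<dots> = (\<Sum>i<n. \<Sum>p\<in>?P. cnj (u (i, p)) * (w (i, p) - v (i, p)))"
    by (rule sum_basis_set)
  moreover have "\<dots> = (\<Sum>p\<in>?P. cnj (u (i0, p)) * (w (i0, p) - v (i0, p)))"
    using i0 by (subst sum.remove[of _ i0]) (auto simp: w1 intro!: sum.neutral)
  ultimately have eq: "ip ?B u w - ip ?B u v = (\<Sum>p\<in>?P. cnj (u (i0, p)) * (w (i0, p) - v (i0, p)))"
    and eq2: "ip ?B (query_op x u) (query_op y v) = ip ?B u w" by simp_all
  have "cmod (ip ?B u v) - cmod (ip ?B u w) \<le> cmod (ip ?B u w - ip ?B u v)"
    by (metis norm_minus_commute norm_triangle_ineq2)
  also have "\<dots> \<le> (\<Sum>p\<in>?P. cmod (u (i0, p)) * cmod (w (i0, p) - v (i0, p)))"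
    unfolding eq by (rule order.trans[OF norm_sum]) (simp add: norm_mult)
  also have "\<dots> \<le> (\<Sum>p\<in>?P. \<alpha>/2 * (cmod (u (i0, p)))\<^sup>2 + (cmod (w (i0, p) - v (i0, p)))\<^sup>2 / (2*\<alpha>))"
    by (intro sum_mono amgm al)
  also have "\<dots> \<le> (\<Sum>p\<in>?P. \<alpha>/2 * (cmod (u (i0, p)))\<^sup>2 + ((cmod (v (i0, \<not> fst p, snd p)))\<^sup>2 + (cmod (v (i0, p)))\<^sup>2) / \<alpha>)"
  proof (intro sum_mono add_left_mono)
    fix p
    have t: "cmod (w (i0, p) - v (i0, p)) \<le> cmod (v (i0, \<not> fst p, snd p)) + cmod (v (i0, p))"
      unfolding w2 by (rule norm_triangle_ineq4)
    have "(cmod (w (i0, p) - v (i0, p)))\<^sup>2 \<le> (cmod (v (i0, \<not> fst p, snd p)) + cmod (v (i0, p)))\<^sup>2"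
      using t by (intro power_mono) auto
    also have "\<dots> \<le> 2 * ((cmod (v (i0, \<not> fst p, snd p)))\<^sup>2 + (cmod (v (i0, p)))\<^sup>2)"
      by (smt (verit) sum_squares_bound power2_sum)
    finally show "(cmod (w (i0, p) - v (i0, p)))\<^sup>2 / (2*\<alpha>) \<le> ((cmod (v (i0, \<not> fst p, snd p)))\<^sup>2 + (cmod (v (i0, p)))\<^sup>2) / \<alpha>"
      using al by (simp add: field_simps)
  qed
  also have "\<dots> = \<alpha>/2 * (\<Sum>p\<in>?P. (cmod (u (i0, p)))\<^sup>2) + ((\<Sum>p\<in>?P. (cmod (v (i0, \<not> fst p, snd p)))\<^sup>2) + (\<Sum>p\<in>?P. (cmod (v (i0, p)))\<^sup>2)) / \<alpha>"
    by (simp add: sum.distrib sum_distrib_left sum_divide_distrib[symmetric] add_divide_distrib)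
  also have "\<dots> = \<alpha>/2 * blk m u i0 + (blk m v i0 + blk m v i0) / \<alpha>"
    unfolding blk_flip by (simp add: blk_def)
  also have "\<dots> \<le> \<alpha> * blk m u i0 + (2 / \<alpha>) * blk m v i0"
    using al blk_nonneg[of m u i0] blk_nonneg[of m v i0] by (simp add: field_simps)
  finally show ?thesis unfolding eq2 .
qed


lemma cmod_ip_le: "cmod (ip B u v) \<le> (\<Sum>a\<in>B. cmod (u a) * cmod (v a))"
  unfolding ip_def by (rule order.trans[OF norm_sum]) (simp add: norm_mult)

lemma meas_bound:
  assumes fin: "finite B" and nu: "nrm B u = 1" and nv: "nrm B v = 1"
    and hu: "(\<Sum>a\<in>B - Acc. (cmod (u a))\<^sup>2) \<ge> 2/3"
    and hv: "(\<Sum>a\<in>B \<inter> Acc. (cmod (v a))\<^sup>2) \<ge> 2/3"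
  shows "cmod (ip B u v) \<le> 17/18"
proof -
  define UA where "UA = (\<Sum>a\<in>B \<inter> Acc. (cmod (u a))\<^sup>2)"
  define UNa where "UNa = (\<Sum>a\<in>B - Acc. (cmod (u a))\<^sup>2)"
  define VA where "VA = (\<Sum>a\<in>B \<inter> Acc. (cmod (v a))\<^sup>2)"
  define VN where "VN = (\<Sum>a\<in>B - Acc. (cmod (v a))\<^sup>2)"
  have u1: "UA + UNa = 1" using nu fin unfolding UA_def UNa_def nrm_def
    by (simp add: sum.Int_Diff[OF fin, of _ Acc])
  have v1: "VA + VN = 1" using nv fin unfolding VA_def VN_def nrm_def
    by (simp add: sum.Int_Diff[OF fin, of _ Acc])
  have a1: "x * y \<le> 3/4 * x\<^sup>2 + 1/3 * y\<^sup>2" for x y :: real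
    using amgm[of "3/2" x y] by simp
  have a2: "x * y \<le> 1/3 * x\<^sup>2 + 3/4 * y\<^sup>2" for x y :: real
    using amgm[of "2/3" x y] by simp
  have "cmod (ip B u v) \<le> (\<Sum>a\<in>B. cmod (u a) * cmod (v a))" by (rule cmod_ip_le)
  also have "\<dots> = (\<Sum>a\<in>B \<inter> Acc. cmod (u a) * cmod (v a)) + (\<Sum>a\<in>B - Acc. cmod (u a) * cmod (v a))"
    by (rule sum.Int_Diff[OF fin])
  also have "\<dots> \<le> (\<Sum>a\<in>B \<inter> Acc. 3/4 * (cmod (u a))\<^sup>2 + 1/3 * (cmod (v a))\<^sup>2)
                  + (\<Sum>a\<in>B - Acc. 1/3 * (cmod (u a))\<^sup>2 + 3/4 * (cmod (v a))\<^sup>2)"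
    by (intro add_mono sum_mono a1 a2)
  also have "\<dots> = 3/4 * UA + 1/3 * VA + (1/3 * UNa + 3/4 * VN)"
    unfolding UA_def VA_def UNa_def VN_def by (simp add: sum.distrib sum_distrib_left)
  finally show ?thesis using u1 v1 hu hv unfolding UNa_def[symmetric] VA_def[symmetric] by linarith
qed

lemma ip_commute: "ip B v u = cnj (ip B u v)"
  unfolding ip_def by (simp add: cnj_sum mult.commute)


definition stp :: "qbasis set \<Rightarrow> (nat \<Rightarrow> bool) \<Rightarrow> qop \<Rightarrow> qstate \<Rightarrow> qstate" where
  "stp B x V v = apply_op B V (query_op x v)"

definition dd :: "nat \<Rightarrow> (nat \<Rightarrow> bool) \<Rightarrow> (nat \<Rightarrow> bool) \<Rightarrow> nat" where
  "dd n x y = (SOME i. i < n \<and> y = x(i := \<not> x i))"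

lemma dd_prop:
  assumes "\<exists>i<n. y = x(i := \<not> x i)"
  shows "dd n x y < n \<and> y = x(dd n x y := \<not> x (dd n x y))"
  unfolding dd_def using someI_ex[OF assms[unfolded Bex_def[symmetric]]] assms
  by (smt (verit, best) someI_ex)

lemma flip_inj: "x(i := \<not> x i) = x(j := \<not> x j) \<Longrightarrow> i = j"
  by (metis fun_upd_apply)

lemma sum_inj_le:
  fixes g :: "nat \<Rightarrow> real"
  assumes fin: "finite Y" and g: "\<And>i. g i \<ge> 0"
    and dlt: "\<And>y. y \<in> Y \<Longrightarrow> r y \<Longrightarrow> d y < n"
    and inj: "inj_on d {y\<in>Y. r y}"
  shows "(\<Sum>y\<in>Y. of_bool (r y) * g (d y)) \<le> (\<Sum>i<n. g i)"
proof -
  have "(\<Sum>y\<in>Y. of_bool (r y) * g (d y)) = (\<Sum>y\<in>{y\<in>Y. r y}. g (d y))"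
    unfolding sum.inter_filter[OF fin, of "\<lambda>y. g (d y)" r] by (intro sum.cong) auto
  also have "\<dots> = (\<Sum>i\<in>d ` {y\<in>Y. r y}. g i)"
    using inj by (simp add: sum.reindex)
  also have "\<dots> \<le> (\<Sum>i<n. g i)"
    using dlt g by (intro sum_mono2) auto
  finally show ?thesis .
qed

lemma one_step:
  fixes \<alpha> :: real
  assumes B: "B = basis_set n M" and finX: "finite X" and finY: "finite Y"
    and U: "unitary_on B V"
    and rel: "\<And>x y. x \<in> X \<Longrightarrow> y \<in> Y \<Longrightarrow> r x y \<Longrightarrow> \<exists>i<n. y = x(i := \<not> x i)"
    and nrm1: "\<And>z. z \<in> X \<union> Y \<Longrightarrow> nrm B (s z) = 1"
    and al: "\<alpha> > 0"
  shows "(\<Sum>x\<in>X. \<Sum>y\<in>Y. of_bool (r x y) * cmod (ip B (stp B x V (s x)) (stp B y V (s y))))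
         \<ge> (\<Sum>x\<in>X. \<Sum>y\<in>Y. of_bool (r x y) * cmod (ip B (s x) (s y))) - (\<alpha> * card X + 2 / \<alpha> * card Y)"
proof -
  have finB: "finite B" unfolding B by (rule finite_basis_set)
  have pw: "of_bool (r x y) * cmod (ip B (s x) (s y)) - of_bool (r x y) * cmod (ip B (stp B x V (s x)) (stp B y V (s y)))
      \<le> \<alpha> * (of_bool (r x y) * blk M (s x) (dd n x y)) + 2 / \<alpha> * (of_bool (r x y) * blk M (s y) (dd n x y))"
    if "x \<in> X" "y \<in> Y" for x y
  proof (cases "r x y")
    case True
    define i where "i = dd n x y"
    from dd_prop[OF rel[OF that True]] have d: "i < n" "y = x(i := \<not> x i)" unfolding i_def[symmetric] by auto
    have "cmod (ip B (s x) (s y)) - cmod (ip B (query_op x (s x)) (query_op y (s y)))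
        \<le> \<alpha> * blk M (s x) i + (2 / \<alpha>) * blk M (s y) i"
      unfolding B by (rule query_drop[OF d al])
    then show ?thesis using True unfolding stp_def i_def ip_unitary[OF finB U] by simp
  qed simp
  have sx: "(\<Sum>x\<in>X. \<Sum>y\<in>Y. of_bool (r x y) * blk M (s x) (dd n x y)) \<le> real (card X)"
  proof -
    have "(\<Sum>x\<in>X. \<Sum>y\<in>Y. of_bool (r x y) * blk M (s x) (dd n x y)) \<le> (\<Sum>x\<in>X. \<Sum>i<n. blk M (s x) i)"
    proof (intro sum_mono sum_inj_le[OF finY blk_nonneg])
      fix x assume x: "x \<in> X"
      show "\<And>y. y \<in> Y \<Longrightarrow> r x y \<Longrightarrow> dd n x y < n" by (rule conjunct1[OF dd_prop[OF rel[OF x]]])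
      show "inj_on (dd n x) {y \<in> Y. r x y}"
      proof (rule inj_onI)
        fix y y' assume a: "y \<in> {y \<in> Y. r x y}" "y' \<in> {y \<in> Y. r x y}" and eq: "dd n x y = dd n x y'"
        have e1: "y = x(dd n x y := \<not> x (dd n x y))" using a(1) by (intro conjunct2[OF dd_prop[OF rel[OF x]]]) auto
        have e2: "y' = x(dd n x y' := \<not> x (dd n x y'))" using a(2) by (intro conjunct2[OF dd_prop[OF rel[OF x]]]) auto
        show "y = y'" using e1 e2[unfolded eq[symmetric]] by (rule trans[OF _ sym])
      qed
    qed
    also have "\<dots> = (\<Sum>x\<in>X. 1)"
      using nrm1 unfolding B by (intro sum.cong refl) (simp add: nrm_blk[symmetric])
    finally show ?thesis by simp
  qed
  have sy: "(\<Sum>x\<in>X. \<Sum>y\<in>Y. of_bool (r x y) * blk M (s y) (dd n x y)) \<le> real (card Y)"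
  proof -
    have "(\<Sum>x\<in>X. \<Sum>y\<in>Y. of_bool (r x y) * blk M (s y) (dd n x y))
        = (\<Sum>y\<in>Y. \<Sum>x\<in>X. of_bool (r x y) * blk M (s y) (dd n x y))"
      by (rule sum.swap)
    also have "\<dots> \<le> (\<Sum>y\<in>Y. \<Sum>i<n. blk M (s y) i)"
    proof (intro sum_mono sum_inj_le[OF finX blk_nonneg])
      fix y assume y: "y \<in> Y"
      show "\<And>x. x \<in> X \<Longrightarrow> r x y \<Longrightarrow> dd n x y < n" by (rule conjunct1[OF dd_prop[OF rel[OF _ y]]])
      show "inj_on (\<lambda>x. dd n x y) {x \<in> X. r x y}"
      proof (rule inj_onI)
        fix x x' assume a: "x \<in> {x \<in> X. r x y}" "x' \<in> {x \<in> X. r x y}" "dd n x y = dd n x' y"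
        define i where "i = dd n x y"
        have e1: "y = x(i := \<not> x i)" using a(1) unfolding i_def by (intro conjunct2[OF dd_prop[OF rel[OF _ y]]]) auto
        have e2: "y = x'(i := \<not> x' i)" using a(2) unfolding i_def a(3) by (intro conjunct2[OF dd_prop[OF rel[OF _ y]]]) auto
        have "x = y(i := \<not> y i)" using e1 by (simp add: fun_eq_iff)
        moreover have "x' = y(i := \<not> y i)" using e2 by (simp add: fun_eq_iff)
        ultimately show "x = x'" by simp
      qed
    qed
    also have "\<dots> = (\<Sum>y\<in>Y. 1)"
      using nrm1 unfolding B by (intro sum.cong refl) (simp add: nrm_blk[symmetric])
    finally show ?thesis by simp
  qed
  have "(\<Sum>x\<in>X. \<Sum>y\<in>Y. of_bool (r x y) * cmod (ip B (s x) (s y)))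
       - (\<Sum>x\<in>X. \<Sum>y\<in>Y. of_bool (r x y) * cmod (ip B (stp B x V (s x)) (stp B y V (s y))))
      = (\<Sum>x\<in>X. \<Sum>y\<in>Y. of_bool (r x y) * cmod (ip B (s x) (s y)) - of_bool (r x y) * cmod (ip B (stp B x V (s x)) (stp B y V (s y))))"
    by (simp add: sum_subtractf)
  also have "\<dots> \<le> (\<Sum>x\<in>X. \<Sum>y\<in>Y. \<alpha> * (of_bool (r x y) * blk M (s x) (dd n x y)) + 2 / \<alpha> * (of_bool (r x y) * blk M (s y) (dd n x y)))"
    by (intro sum_mono pw)
  also have "\<dots> = \<alpha> * (\<Sum>x\<in>X. \<Sum>y\<in>Y. of_bool (r x y) * blk M (s x) (dd n x y)) + 2 / \<alpha> * (\<Sum>x\<in>X. \<Sum>y\<in>Y. of_bool (r x y) * blk M (s y) (dd n x y))"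
    by (simp add: sum.distrib sum_distrib_left)
  also have "\<dots> \<le> \<alpha> * card X + 2 / \<alpha> * card Y"
    using sx sy al by (intro add_mono mult_left_mono) auto
  finally show ?thesis by linarith
qed


lemma fold_nrm:
  assumes B: "B = basis_set n M" and U: "\<forall>V\<in>set Vs. unitary_on B V" and s: "nrm B s = 1"
  shows "nrm B (fold (stp B x) Vs s) = 1"
  using U s
proof (induction Vs arbitrary: s)
  case Nil then show ?case by simp
next
  case (Cons V Vs)
  have "nrm B (stp B x V s) = 1"
    unfolding stp_def B using Cons.prems finite_basis_set
    by (simp add: nrm_unitary nrm_query B)
  then show ?case using Cons by simp
qed

lemma fold_adv:
  fixes \<alpha> :: real
  assumes B: "B = basis_set n M" and finX: "finite X" and finY: "finite Y"
    and U: "\<forall>V\<in>set Vs. unitary_on B V"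
    and rel: "\<And>x y. x \<in> X \<Longrightarrow> y \<in> Y \<Longrightarrow> r x y \<Longrightarrow> \<exists>i<n. y = x(i := \<not> x i)"
    and nrm1: "\<And>z. z \<in> X \<union> Y \<Longrightarrow> nrm B (s z) = 1"
    and al: "\<alpha> > 0"
  shows "(\<Sum>x\<in>X. \<Sum>y\<in>Y. of_bool (r x y) * cmod (ip B (fold (stp B x) Vs (s x)) (fold (stp B y) Vs (s y))))
         \<ge> (\<Sum>x\<in>X. \<Sum>y\<in>Y. of_bool (r x y) * cmod (ip B (s x) (s y))) - length Vs * (\<alpha> * card X + 2 / \<alpha> * card Y)"
  using U nrm1
proof (induction Vs arbitrary: s)
  case Nil then show ?case by simp
next
  case (Cons V Vs)
  define s' where "s' z = stp B z V (s z)" for z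
  have n': "nrm B (s' z) = 1" if "z \<in> X \<union> Y" for z
    unfolding s'_def stp_def B using Cons.prems that finite_basis_set
    by (simp add: nrm_unitary nrm_query B)
  have IH: "(\<Sum>x\<in>X. \<Sum>y\<in>Y. of_bool (r x y) * cmod (ip B (fold (stp B x) Vs (s' x)) (fold (stp B y) Vs (s' y))))
         \<ge> (\<Sum>x\<in>X. \<Sum>y\<in>Y. of_bool (r x y) * cmod (ip B (s' x) (s' y))) - length Vs * (\<alpha> * card X + 2 / \<alpha> * card Y)"
    using Cons.IH[of s'] Cons.prems n' by simp
  have os: "(\<Sum>x\<in>X. \<Sum>y\<in>Y. of_bool (r x y) * cmod (ip B (s' x) (s' y)))
         \<ge> (\<Sum>x\<in>X. \<Sum>y\<in>Y. of_bool (r x y) * cmod (ip B (s x) (s y))) - (\<alpha> * card X + 2 / \<alpha> * card Y)"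
    unfolding s'_def using Cons.prems
    by (intro one_step[OF B finX finY _ rel _ al]) auto
  have len: "real (length (V # Vs)) * (\<alpha> * card X + 2 / \<alpha> * card Y)
      = real (length Vs) * (\<alpha> * card X + 2 / \<alpha> * card Y) + (\<alpha> * card X + 2 / \<alpha> * card Y)"
    by (simp add: algebra_simps add_divide_distrib)
  have "fold (stp B z) (V # Vs) (s z) = fold (stp B z) Vs (s' z)" for z by (simp add: s'_def)
  then show ?case using IH os len by (simp only:)
qed

lemma init_in: "0 < n \<Longrightarrow> 0 < M \<Longrightarrow> (0, False, 0) \<in> basis_set n M"
  unfolding basis_set_def by auto

lemma nrm_init: "0 < n \<Longrightarrow> 0 < M \<Longrightarrow> nrm (basis_set n M) init_state = 1"
  unfolding nrm_def init_state_def using finite_basis_set[of n M] init_in[of n M]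
  by (simp add: if_distrib[of "\<lambda>z. (cmod z)\<^sup>2"] sum.delta cong: if_cong)

lemma run_fold: "run B x (U # Us) = fold (stp B x) Us (apply_op B U init_state)"
  by (simp add: stp_def[abs_def])

lemma adversary:
  fixes \<alpha> :: real and m1 m2 :: nat
  assumes comp: "computes n M Us Acc f"
    and finX: "finite X" and finY: "finite Y" and Xne: "X \<noteq> {}"
    and rel: "\<And>x y. x \<in> X \<Longrightarrow> y \<in> Y \<Longrightarrow> r x y \<Longrightarrow> \<exists>i<n. y = x(i := \<not> x i)"
    and fd: "\<And>x y. x \<in> X \<Longrightarrow> y \<in> Y \<Longrightarrow> r x y \<Longrightarrow> f x \<noteq> f y"
    and cx: "\<And>x. x \<in> X \<Longrightarrow> card {y\<in>Y. r x y} \<ge> m1"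
    and cy: "\<And>y. y \<in> Y \<Longrightarrow> card {x\<in>X. r x y} \<ge> m2"
    and m1: "m1 > 0" and m2: "m2 > 0" and al: "\<alpha> > 0"
  shows "1/18 \<le> real (length Us - 1) * (\<alpha> / m1 + 2 / (\<alpha> * m2))"
proof -
  define B where "B = basis_set n M"
  have finB: "finite B" unfolding B_def by (rule finite_basis_set)
  from comp have M: "0 < M" and Une: "Us \<noteq> []" and Uu: "\<forall>U\<in>set Us. unitary_on B U"
    unfolding computes_def B_def by auto
  obtain U0 Vs where Us: "Us = U0 # Vs" using Une by (cases Us) auto
  obtain x0 where x0: "x0 \<in> X" using Xne by auto
  have "card {y\<in>Y. r x0 y} > 0" using cx[OF x0] m1 by simp
  then obtain y0 where y0: "y0 \<in> Y" "r x0 y0" by (metis (no_types, lifting) card_gt_0_iff empty_iff mem_Collect_eq subsetI subset_empty)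
  obtain i0 where "i0 < n" using rel[OF x0 y0] by auto
  then have n0: "0 < n" by simp
  define s0 where "s0 = apply_op B U0 init_state"
  have ns0: "nrm B s0 = 1" unfolding s0_def
    using Uu Us nrm_unitary[OF finB] nrm_init[OF n0 M] B_def by simp
  define \<psi> where "\<psi> z = fold (stp B z) Vs s0" for z
  have psi_run: "\<psi> z = run B z Us" for z unfolding \<psi>_def Us run_fold s0_def ..
  have npsi: "nrm B (\<psi> z) = 1" for z
    unfolding \<psi>_def using fold_nrm[OF B_def _ ns0] Uu Us by simp
  define Rc where "Rc = (\<Sum>x\<in>X. \<Sum>y\<in>Y. of_bool (r x y) :: real)"
  have Rcx: "Rc \<ge> real m1 * real (card X)"
  proof -
    have "Rc = (\<Sum>x\<in>X. real (card {y\<in>Y. r x y}))"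
      unfolding Rc_def using finY by (intro sum.cong refl) (simp add: Int_def)
    also have "\<dots> \<ge> (\<Sum>x\<in>X. real m1)" using cx by (intro sum_mono) auto
    finally show ?thesis by (simp add: mult.commute)
  qed
  have Rcy: "Rc \<ge> real m2 * real (card Y)"
  proof -
    have "Rc = (\<Sum>y\<in>Y. \<Sum>x\<in>X. of_bool (r x y) :: real)" unfolding Rc_def by (rule sum.swap)
    also have "\<dots> = (\<Sum>y\<in>Y. real (card {x\<in>X. r x y}))"
      using finX by (intro sum.cong refl) (simp add: Int_def)
    also have "\<dots> \<ge> (\<Sum>y\<in>Y. real m2)" using cy by (intro sum_mono) auto
    finally show ?thesis by (simp add: mult.commute)
  qed
  have Rcpos: "Rc > 0"
  proof -
    have "card X > 0" using finX Xne by (simp add: card_gt_0_iff)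
    then have "real m1 * card X > 0" using m1 by simp
    then show ?thesis using Rcx by linarith
  qed
  have W0: "(\<Sum>x\<in>X. \<Sum>y\<in>Y. of_bool (r x y) * cmod (ip B s0 s0)) = Rc"
    unfolding Rc_def ip_self ns0 by simp
  have adv: "(\<Sum>x\<in>X. \<Sum>y\<in>Y. of_bool (r x y) * cmod (ip B (\<psi> x) (\<psi> y)))
         \<ge> Rc - length Vs * (\<alpha> * card X + 2 / \<alpha> * card Y)"
    using fold_adv[OF B_def finX finY _ rel _ al, where Vs=Vs and s="\<lambda>_. s0" and r=r] Uu Us ns0 W0
    unfolding \<psi>_def by simp
  have fin_bound: "cmod (ip B (\<psi> x) (\<psi> y)) \<le> 17/18" if "x \<in> X" "y \<in> Y" "r x y" for x y
  proof -
    have hx: "(if f x then (\<Sum>a\<in>B \<inter> Acc. (cmod (\<psi> x a))\<^sup>2) else (\<Sum>a\<in>B - Acc. (cmod (\<psi> x a))\<^sup>2)) \<ge> 2/3"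
      using comp unfolding computes_def psi_run B_def Let_def by blast
    have hy: "(if f y then (\<Sum>a\<in>B \<inter> Acc. (cmod (\<psi> y a))\<^sup>2) else (\<Sum>a\<in>B - Acc. (cmod (\<psi> y a))\<^sup>2)) \<ge> 2/3"
      using comp unfolding computes_def psi_run B_def Let_def by blast
    show ?thesis
    proof (cases "f x")
      case True
      then have "\<not> f y" using fd[OF that] by simp
      then have "cmod (ip B (\<psi> y) (\<psi> x)) \<le> 17/18"
        using hx hy True by (intro meas_bound[OF finB npsi npsi]) auto
      then show ?thesis by (simp add: ip_commute[of B "\<psi> y"])
    next
      case False
      then have "f y" using fd[OF that] by simp
      then show ?thesis using hx hy False by (intro meas_bound[OF finB npsi npsi]) auto
    qed
  qed
  have "(\<Sum>x\<in>X. \<Sum>y\<in>Y. of_bool (r x y) * cmod (ip B (\<psi> x) (\<psi> y)))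
       \<le> (\<Sum>x\<in>X. \<Sum>y\<in>Y. of_bool (r x y) * (17/18))"
    using fin_bound by (intro sum_mono) (auto simp: of_bool_def)
  also have "\<dots> = 17/18 * Rc" unfolding Rc_def by (simp add: sum_distrib_left sum_distrib_right mult.commute)
  finally have "Rc / 18 \<le> length Vs * (\<alpha> * card X + 2 / \<alpha> * card Y)" using adv by linarith
  also have "\<dots> \<le> length Vs * (\<alpha> * (Rc / m1) + 2 / \<alpha> * (Rc / m2))"
  proof -
    have h1: "\<alpha> * card X \<le> \<alpha> * (Rc / m1)" using Rcx m1 al by (intro mult_left_mono) (auto simp: field_simps)
    have h2: "2 / \<alpha> * card Y \<le> 2 / \<alpha> * (Rc / m2)" using Rcy m2 al by (intro mult_left_mono) (auto simp: field_simps)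
    show ?thesis using h1 h2 by (intro mult_left_mono) auto
  qed
  also have "\<dots> = Rc * (length Vs * (\<alpha> / m1 + 2 / (\<alpha> * m2)))" by (simp add: field_simps)
  finally have "Rc * (1/18) \<le> Rc * (length Vs * (\<alpha> / m1 + 2 / (\<alpha> * m2)))" by simp
  then have "1/18 \<le> length Vs * (\<alpha> / m1 + 2 / (\<alpha> * m2))" by (rule mult_left_le_imp_le[OF _ Rcpos])
  then show ?thesis using Us by simp
qed


definition orblk :: "nat \<Rightarrow> nat \<Rightarrow> formula" where
  "orblk b i = OrG (map (\<lambda>p. Var (i * b + p)) [0..<b])"

definition xorf :: "formula \<Rightarrow> formula \<Rightarrow> formula" where
  "xorf A B = OrG [AndG [A, Neg B], AndG [Neg A, B]]"

fun par :: "nat \<Rightarrow> (nat \<Rightarrow> formula) \<Rightarrow> nat \<Rightarrow> formula" where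
  "par 0 g off = g off"
| "par (Suc j) g off = xorf (par j g off) (par j g (off + 2^j))"

definition cnt :: "(nat \<Rightarrow> bool) \<Rightarrow> nat \<Rightarrow> nat \<Rightarrow> nat" where
  "cnt E off N = (\<Sum>i<N. if E (off + i) then 1 else 0)"

lemma cnt_add: "cnt E off (N + M) = cnt E off N + cnt E (off + N) M"
  by (induction M) (simp_all add: cnt_def add.assoc)

lemma eval_xorf: "eval (xorf A B) x = (eval A x \<noteq> eval B x)"
  unfolding xorf_def by auto

lemma eval_par: "eval (par j g off) x = odd (cnt (\<lambda>i. eval (g i) x) off (2^j))"
proof (induction j arbitrary: off)
  case 0 then show ?case by (simp add: cnt_def)
next
  case (Suc j)
  have "cnt (\<lambda>i. eval (g i) x) off (2^Suc j) = cnt (\<lambda>i. eval (g i) x) off (2^j) + cnt (\<lambda>i. eval (g i) x) (off + 2^j) (2^j)"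
    using cnt_add[of _ off "2^j" "2^j"] by (simp add: mult_2)
  then show ?case using Suc by (simp add: eval_xorf)
qed

lemma leaves_par: "(\<And>i. leaves (g i) = L) \<Longrightarrow> leaves (par j g off) = 4^j * L"
  by (induction j arbitrary: off) (simp_all add: xorf_def)

lemma gates_par: "(\<And>i. gates (g i) = 1) \<Longrightarrow> gates (par j g off) + 1 = 2 * 4^j"
proof (induction j arbitrary: off)
  case 0 then show ?case by simp
next
  case (Suc j)
  have "gates (par j g off) + 1 = 2 * 4^j" "gates (par j g (off + 2^j)) + 1 = 2 * 4^j"
    using Suc by auto
  then show ?case by (simp add: xorf_def)
qed

lemma vars_par: "vars (par j g off) \<subseteq> (\<Union>i<2^j. vars (g (off + i)))"
proof (induction j arbitrary: off)
  case 0 then show ?case by auto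
next
  case (Suc j)
  have a: "(\<Union>i<2^j. vars (g (off + i))) \<subseteq> (\<Union>i<2^Suc j. vars (g (off + i)))"
    by (intro UN_mono) auto
  have b: "(\<Union>i<2^j. vars (g (off + 2^j + i))) \<subseteq> (\<Union>i<2^Suc j. vars (g (off + i)))"
  proof
    fix v assume "v \<in> (\<Union>i<2^j. vars (g (off + 2^j + i)))"
    then obtain i where "i < 2^j" "v \<in> vars (g (off + (2^j + i)))" by (auto simp: add.assoc)
    then show "v \<in> (\<Union>i<2^Suc j. vars (g (off + i)))" by (intro UN_I[of "2^j + i"]) auto
  qed
  show ?case using Suc[of off] Suc[of "off + 2^j"] a b by (auto simp: xorf_def)
qed

lemma eval_orblk: "eval (orblk b i) x = (\<exists>p<b. x (i * b + p))"
  unfolding orblk_def by auto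

lemma leaves_orblk: "leaves (orblk b i) = b"
  unfolding orblk_def by (simp add: comp_def sum_list_triv)

lemma gates_orblk: "gates (orblk b i) = 1"
  unfolding orblk_def by (simp add: comp_def sum_list_triv)

lemma vars_orblk: "vars (orblk b i) = {i * b + p | p. p < b}"
  unfolding orblk_def by auto


definition ind :: "nat set \<Rightarrow> nat \<Rightarrow> bool" where
  "ind P = (\<lambda>i. i \<in> P)"

definition SP :: "nat \<Rightarrow> nat \<Rightarrow> nat \<Rightarrow> nat set set" where
  "SP k b t = {P. P \<subseteq> {..<k*b} \<and> inj_on (\<lambda>p. p div b) P \<and> card P = t}"

lemma ind_inj: "ind P = ind P' \<Longrightarrow> P = P'"
  unfolding ind_def by (metis Collect_mem_eq)

lemma finite_SP: "finite (SP k b t)"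
proof -
  have "SP k b t \<subseteq> Pow {..<k*b}" unfolding SP_def by auto
  then show ?thesis by (rule finite_subset) simp
qed

lemma div_blk: "p < (b::nat) \<Longrightarrow> (i*b+p) div b = i"
  by (metis add.commute add_0 div_less div_mult_self1 not_less0)

lemma mod_blk: "p < (b::nat) \<Longrightarrow> (i*b+p) mod b = p"
  by (metis add.commute mod_less mod_mult_self1)

lemma blocks_eq:
  assumes b: "(b::nat) > 0" and P: "P \<subseteq> {..<k*b}"
  shows "{i. i < k \<and> (\<exists>p<b. i*b+p \<in> P)} = (\<lambda>p. p div b) ` P"
proof
  show "{i. i < k \<and> (\<exists>p<b. i*b+p \<in> P)} \<subseteq> (\<lambda>p. p div b) ` P"
  proof
    fix i assume "i \<in> {i. i < k \<and> (\<exists>p<b. i*b+p \<in> P)}"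
    then obtain p where "p < b" "i*b+p \<in> P" by auto
    moreover have "(i*b+p) div b = i" by (rule div_blk[OF \<open>p < b\<close>])
    ultimately show "i \<in> (\<lambda>p. p div b) ` P" by (metis image_eqI)
  qed
  show "(\<lambda>p. p div b) ` P \<subseteq> {i. i < k \<and> (\<exists>p<b. i*b+p \<in> P)}"
  proof
    fix i assume "i \<in> (\<lambda>p. p div b) ` P"
    then obtain q where q: "q \<in> P" "i = q div b" by auto
    have "q < k*b" using q P by auto
    then have "i < k" using q b by (simp add: less_mult_imp_div_less)
    moreover have "i*b + q mod b \<in> P" using q by (simp add: div_mult_mod_eq)
    moreover have "q mod b < b" using b by simp
    ultimately show "i \<in> {i. i < k \<and> (\<exists>p<b. i*b+p \<in> P)}" by blast
  qed
qed

lemma cnt_card: "cnt E 0 k = card {i. i < k \<and> E i}"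
  unfolding cnt_def
  by (simp add: sum.If_cases Int_def lessThan_def conj_commute)

lemma count_blocks:
  assumes b: "(b::nat) > 0" and P: "P \<subseteq> {..<k*b}" and sp: "inj_on (\<lambda>p. p div b) P"
  shows "cnt (\<lambda>i. \<exists>p<b. ind P (i*b+p)) 0 k = card P"
  unfolding cnt_card ind_def blocks_eq[OF b P] using card_image[OF sp] .

lemma card_blockset:
  assumes b: "(b::nat) > 0" and E: "finite E"
  shows "card ((\<lambda>(j,p). j*b+p) ` (E \<times> {..<b})) = card E * b"
proof -
  have "inj_on (\<lambda>(j,p). j*b+p) (E \<times> {..<b})"
  proof (rule inj_onI, clarify)
    fix j p j' p' assume a: "p < b" "p' < b" "j*b+p = j'*b+p'"
    have "j = j'" using div_blk[OF a(1), of j] div_blk[OF a(2), of j'] a(3) by simp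
    moreover have "p = p'" using mod_blk[OF a(1), of j] mod_blk[OF a(2), of j'] a(3) by simp
    ultimately show "j = j' \<and> p = p'" by simp
  qed
  then show ?thesis using E by (simp add: card_image card_cartesian_product)
qed

lemma blk_lt: "j < k \<Longrightarrow> p < (b::nat) \<Longrightarrow> j*b+p < k*b"
proof -
  assume "j < k" "p < b"
  then have "j*b+p < j*b+b" by simp
  also have "\<dots> = (j+1)*b" by simp
  also have "\<dots> \<le> k*b" using \<open>j<k\<close> by (intro mult_right_mono) auto
  finally show ?thesis .
qed

lemma ind_flip_insert: "q \<notin> P \<Longrightarrow> ind (insert q P) = (ind P)(q := \<not> ind P q)"
  unfolding ind_def by (auto simp: fun_eq_iff)

lemma ind_flip_remove: "q \<in> P \<Longrightarrow> ind P = (ind (P - {q}))(q := \<not> ind (P - {q}) q)"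
  unfolding ind_def by (auto simp: fun_eq_iff)

lemma flip_inj2: "x(i := \<not> x i) = x(j := \<not> x j) \<Longrightarrow> i = j"
  by (metis fun_upd_apply)

lemma cx_bound:
  assumes b: "(b::nat) > 0" and kbn: "k*b \<le> n" and P: "P \<in> SP k b t"
  shows "card {y \<in> ind ` SP k b (t+1). \<exists>i<n. y = (ind P)(i := \<not> ind P i)} \<ge> (k - t) * b"
proof -
  have Psub: "P \<subseteq> {..<k*b}" and sp: "inj_on (\<lambda>p. p div b) P" and cP: "card P = t"
    using P unfolding SP_def by auto
  define D where "D = (\<lambda>p. p div b) ` P"
  have Dsub: "D \<subseteq> {..<k}"
  proof
    fix i assume "i \<in> D"
    then obtain q where "q \<in> P" "i = q div b" unfolding D_def by auto
    then show "i \<in> {..<k}" using Psub b by (auto simp: less_mult_imp_div_less)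
  qed
  have cD: "card D = t" unfolding D_def using card_image[OF sp] cP by simp
  define E where "E = {..<k} - D"
  have cE: "card E = k - t" unfolding E_def using Dsub cD by (simp add: card_Diff_subset finite_subset)
  define Qs where "Qs = (\<lambda>(j,p). j*b+p) ` (E \<times> {..<b})"
  have cQ: "card Qs = (k - t) * b" unfolding Qs_def using card_blockset[OF b, of E] cE unfolding E_def by simp
  have Qprop: "q < k*b \<and> q div b \<notin> D" if "q \<in> Qs" for q
  proof -
    from that obtain j p where jp: "j \<in> E" "p < b" "q = j*b+p" unfolding Qs_def by auto
    have "j < k" "j \<notin> D" using jp unfolding E_def by auto
    then show ?thesis using jp blk_lt div_blk by simp
  qed
  have sub: "(\<lambda>q. (ind P)(q := \<not> ind P q)) ` Qs \<subseteq> {y \<in> ind ` SP k b (t+1). \<exists>i<n. y = (ind P)(i := \<not> ind P i)}"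
  proof
    fix y assume "y \<in> (\<lambda>q. (ind P)(q := \<not> ind P q)) ` Qs"
    then obtain q where q: "q \<in> Qs" "y = (ind P)(q := \<not> ind P q)" by auto
    have q1: "q < k*b" "q div b \<notin> D" using Qprop[OF q(1)] by auto
    have qP: "q \<notin> P" using q1(2) unfolding D_def by auto
    have "insert q P \<in> SP k b (t+1)"
      unfolding SP_def using Psub q1 sp cP qP finite_subset[OF Psub]
      by (auto simp: D_def)
    moreover have "y = ind (insert q P)" using q(2) ind_flip_insert[OF qP] by simp
    moreover have "q < n" using q1 kbn by simp
    ultimately show "y \<in> {y \<in> ind ` SP k b (t+1). \<exists>i<n. y = (ind P)(i := \<not> ind P i)}"
      using q(2) by blast
  qed
  have inj: "inj_on (\<lambda>q. (ind P)(q := \<not> ind P q)) Qs"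
    by (rule inj_onI) (rule flip_inj2)
  have fin: "finite {y \<in> ind ` SP k b (t+1). \<exists>i<n. y = (ind P)(i := \<not> ind P i)}"
    using finite_SP by simp
  have "card Qs \<le> card {y \<in> ind ` SP k b (t+1). \<exists>i<n. y = (ind P)(i := \<not> ind P i)}"
    using card_mono[OF fin sub] card_image[OF inj] by simp
  then show ?thesis using cQ by simp
qed

lemma cy_bound:
  assumes b: "(b::nat) > 0" and kbn: "k*b \<le> n" and P: "P \<in> SP k b (t+1)"
  shows "card {x \<in> ind ` SP k b t. \<exists>i<n. ind P = x(i := \<not> x i)} \<ge> t + 1"
proof -
  have Psub: "P \<subseteq> {..<k*b}" and sp: "inj_on (\<lambda>p. p div b) P" and cP: "card P = t + 1"
    using P unfolding SP_def by auto
  have finP: "finite P" using finite_subset[OF Psub] by simp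
  have sub: "(\<lambda>q. ind (P - {q})) ` P \<subseteq> {x \<in> ind ` SP k b t. \<exists>i<n. ind P = x(i := \<not> x i)}"
  proof
    fix x assume "x \<in> (\<lambda>q. ind (P - {q})) ` P"
    then obtain q where q: "q \<in> P" "x = ind (P - {q})" by auto
    have "P - {q} \<in> SP k b t"
      unfolding SP_def using Psub sp cP finP q(1) by (auto intro: inj_on_subset)
    moreover have "q < n" using q(1) Psub kbn by auto
    ultimately show "x \<in> {x \<in> ind ` SP k b t. \<exists>i<n. ind P = x(i := \<not> x i)}"
      using q ind_flip_remove[OF q(1)] by blast
  qed
  have inj: "inj_on (\<lambda>q. ind (P - {q})) P"
  proof (rule inj_onI)
    fix q q' assume "q \<in> P" "q' \<in> P" "ind (P - {q}) = ind (P - {q'})"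
    then have "P - {q} = P - {q'}" using ind_inj by blast
    then show "q = q'" using \<open>q \<in> P\<close> \<open>q' \<in> P\<close> by blast
  qed
  have fin: "finite {x \<in> ind ` SP k b t. \<exists>i<n. ind P = x(i := \<not> x i)}"
    using finite_SP by simp
  show ?thesis using card_mono[OF fin sub] card_image[OF inj] cP by simp
qed

lemma SP_nonempty:
  assumes b: "(b::nat) > 0" and t: "t \<le> k"
  shows "(\<lambda>j. j*b) ` {..<t} \<in> SP k b t"
proof -
  have inj1: "inj_on (\<lambda>j. j*b) {..<t}" using b by (intro inj_onI) simp
  have "(\<lambda>j. j*b) ` {..<t} \<subseteq> {..<k*b}"
  proof
    fix q assume "q \<in> (\<lambda>j. j*b) ` {..<t}"
    then obtain j where "j < t" "q = j*b" by auto
    then show "q \<in> {..<k*b}" using t b blk_lt[of j k 0 b] by auto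
  qed
  moreover have "inj_on (\<lambda>p. p div b) ((\<lambda>j. j*b) ` {..<t})"
    using b by (intro inj_onI) auto
  moreover have "card ((\<lambda>j. j*b) ` {..<t}) = t" using card_image[OF inj1] by simp
  ultimately show ?thesis unfolding SP_def by simp
qed

lemma adv_instance:
  fixes \<alpha> :: real
  assumes b: "(b::nat) > 0" and kbn: "k*b \<le> n" and tk: "t < k"
    and fP: "\<And>P. P \<subseteq> {..<k*b} \<Longrightarrow> inj_on (\<lambda>p. p div b) P \<Longrightarrow> f (ind P) = odd (card P)"
    and comp: "computes n M Us Acc f" and al: "\<alpha> > 0"
  shows "1/18 \<le> real (length Us - 1) * (\<alpha> / real ((k - t) * b) + 2 / (\<alpha> * real (t + 1)))"
proof (rule adversary[OF comp _ _ _ _ _ _ _ _ _ al, where X="ind ` SP k b t" and Y="ind ` SP k b (t+1)"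
      and r="\<lambda>x y. \<exists>i<n. y = x(i := \<not> x i)"])
  show "finite (ind ` SP k b t)" "finite (ind ` SP k b (t+1))" using finite_SP by auto
  show "ind ` SP k b t \<noteq> {}" using SP_nonempty[OF b, of t k] tk by auto
  show "\<And>x y. x \<in> ind ` SP k b t \<Longrightarrow> y \<in> ind ` SP k b (t + 1) \<Longrightarrow> \<exists>i<n. y = x(i := \<not> x i)
          \<Longrightarrow> \<exists>i<n. y = x(i := \<not> x i)" by simp
  show "f x \<noteq> f y" if xX: "x \<in> ind ` SP k b t" and yY: "y \<in> ind ` SP k b (t + 1)" for x y
  proof -
    obtain P where P: "P \<in> SP k b t" "x = ind P" using xX by blast
    obtain P' where P': "P' \<in> SP k b (t+1)" "y = ind P'" using yY by blast
    have "f x = odd t" using P fP unfolding SP_def by auto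
    moreover have "f y = odd (t+1)" using P' fP unfolding SP_def by auto
    ultimately show ?thesis by simp
  qed
  show "card {y \<in> ind ` SP k b (t + 1). \<exists>i<n. y = x(i := \<not> x i)} \<ge> (k - t) * b"
    if "x \<in> ind ` SP k b t" for x
    using that cx_bound[OF b kbn] by blast
  show "card {x \<in> ind ` SP k b t. \<exists>i<n. y = x(i := \<not> x i)} \<ge> t + 1"
    if "y \<in> ind ` SP k b (t + 1)" for y
    using that cy_bound[OF b kbn] by blast
  show "0 < (k - t) * b" using b tk by simp
  show "0 < t + 1" by simp
qed


definition dl :: "qbasis \<Rightarrow> qstate" where
  "dl s = (\<lambda>a. if a = s then 1 else 0)"

definition pm :: "(qbasis \<Rightarrow> qbasis) \<Rightarrow> qop" where
  "pm \<sigma> = (\<lambda>a b. if a = \<sigma> b then 1 else 0)"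

lemma unitary_pm:
  assumes fin: "finite B" and into: "\<And>a. a \<in> B \<Longrightarrow> \<sigma> a \<in> B" and inv: "\<And>a. a \<in> B \<Longrightarrow> \<sigma> (\<sigma> a) = a"
  shows "unitary_on B (pm \<sigma>)"
  unfolding unitary_on_def
proof (intro ballI)
  fix a b assume a: "a \<in> B" and b: "b \<in> B"
  have "(\<Sum>c\<in>B. cnj (pm \<sigma> c a) * pm \<sigma> c b) = (\<Sum>c\<in>B. if c = \<sigma> a then (if \<sigma> a = \<sigma> b then 1 else 0) else 0)"
    unfolding pm_def by (intro sum.cong refl) auto
  also have "\<dots> = (if \<sigma> a = \<sigma> b then 1 else 0)"
    using fin into[OF a] by (simp add: sum.delta)
  also have "\<dots> = (if a = b then 1 else 0)"
    using inv[OF a] inv[OF b] by metis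
  finally show "(\<Sum>c\<in>B. cnj (pm \<sigma> c a) * pm \<sigma> c b) = (if a = b then 1 else 0)" .
qed

lemma apply_pm:
  assumes fin: "finite B" and s: "s \<in> B" and ss: "\<sigma> s \<in> B"
    and inj: "\<And>a. a \<in> B \<Longrightarrow> \<sigma> a = \<sigma> s \<Longrightarrow> a = s"
  shows "apply_op B (pm \<sigma>) (dl s) = dl (\<sigma> s)"
proof
  fix a
  show "apply_op B (pm \<sigma>) (dl s) a = dl (\<sigma> s) a"
  proof (cases "a \<in> B")
    case True
    have "(\<Sum>b\<in>B. pm \<sigma> a b * dl s b) = (\<Sum>b\<in>B. if b = s then (if a = \<sigma> s then 1 else 0) else 0)"
      unfolding pm_def dl_def by (intro sum.cong refl) auto
    also have "\<dots> = (if a = \<sigma> s then 1 else 0)" using fin s by (simp add: sum.delta)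
    finally show ?thesis using True unfolding apply_op_def dl_def by simp
  next
    case False
    then show ?thesis using ss unfolding apply_op_def dl_def by auto
  qed
qed

lemma query_dl: "query_op x (dl (i, c, w)) = dl (i, c \<noteq> x i, w)"
  unfolding query_op_def dl_def by (auto simp: fun_eq_iff)

definition enc :: "(nat \<Rightarrow> bool) \<Rightarrow> nat \<Rightarrow> nat" where
  "enc x j = (\<Sum>i<j. if x i then 2^i else 0)"

lemma enc_Suc: "enc x (Suc j) = enc x j + (if x j then 2^j else 0)"
  unfolding enc_def by simp

lemma enc_lt: "enc x j < 2^j"
proof (induction j)
  case 0 then show ?case by (simp add: enc_def)
next
  case (Suc j) then show ?case by (simp add: enc_Suc)
qed

lemma div_mod_top:
  assumes "a < (2::nat)^j"
  shows "(a + (if c then 2^j else 0)) div 2^j = (if c then 1 else 0)"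
    and "(a + (if c then 2^j else 0)) mod 2^j = a"
  using assms by auto

lemma enc_inj: "enc x j = enc y j \<Longrightarrow> i < j \<Longrightarrow> x i = y i"
proof (induction j arbitrary: i)
  case 0 then show ?case by simp
next
  case (Suc j)
  have e: "enc x j + (if x j then 2^j else 0) = enc y j + (if y j then 2^j else 0)"
    using Suc.prems(1) by (simp add: enc_Suc)
  have "x j = y j" using div_mod_top(1)[OF enc_lt, of x j "x j"] div_mod_top(1)[OF enc_lt, of y j "y j"] e
    by (metis zero_neq_one)
  moreover have "enc x j = enc y j" using div_mod_top(2)[OF enc_lt, of x j "x j"] div_mod_top(2)[OF enc_lt, of y j "y j"] e
    by metis
  ultimately show ?case using Suc by (metis less_Suc_eq)
qed

definition sw :: "nat \<Rightarrow> qbasis \<Rightarrow> qbasis" where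
  "sw j = (\<lambda>(i,c,w). if i = j \<and> w < 2^j then (Suc j, False, w + (if c then 2^j else 0))
                   else if i = Suc j \<and> \<not> c \<and> w < 2^Suc j then (j, 2^j \<le> w, w mod 2^j)
                   else (i,c,w))"

lemma sw_inv: "sw j (sw j a) = a"
proof -
  obtain i c w where a: "a = (i, c, w)" by (cases a) auto
  show ?thesis
  proof (cases "i = j \<and> w < 2^j")
    case True
    then show ?thesis unfolding a sw_def by auto
  next
    case False
    show ?thesis
    proof (cases "i = Suc j \<and> \<not> c \<and> w < 2^Suc j")
      case True
      have m: "w mod 2^j < 2^j" by simp
      have "w mod 2^j + (if 2^j \<le> w then 2^j else 0) = w"
        using True by (auto simp: le_mod_geq mod_less)
      then show ?thesis using False True m unfolding a sw_def by auto
    next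
      case False2: False
      then show ?thesis using False unfolding a sw_def by auto
    qed
  qed
qed

lemma sw_into:
  assumes "Suc j < n" "a \<in> basis_set n (2^n)"
  shows "sw j a \<in> basis_set n (2^n)"
proof -
  obtain i c w where a: "a = (i, c, w)" by (cases a) auto
  have w: "w < 2^n" "i < n" using assms(2) unfolding a basis_set_def by auto
  have p: "(2::nat)^Suc j \<le> 2^n" using assms(1) by (intro power_increasing) auto
  have p2: "(2::nat)^j \<le> 2^n" using assms(1) by (intro power_increasing) auto
  have "w mod 2^j < 2^n" using p2 by (meson less_le_trans mod_less_divisor zero_less_numeral zero_less_power)
  moreover have "w < 2^j \<Longrightarrow> w + (if c then 2^j else 0) < 2^n" using p by auto
  ultimately show ?thesis using assms w unfolding a sw_def basis_set_def by auto
qed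

lemma init_dl: "init_state = dl (0, False, 0)"
  unfolding init_state_def dl_def ..

lemma apply_id: "finite B \<Longrightarrow> s \<in> B \<Longrightarrow> apply_op B (pm id) (dl s) = dl s"
  using apply_pm[of B s id] by simp

lemma fold_part:
  assumes n: "j \<le> n - 1" "0 < n"
  shows "fold (stp (basis_set n (2^n)) x) (map (\<lambda>j. pm (sw j)) [0..<j]) (dl (0, False, 0)) = dl (j, False, enc x j)"
  using n
proof (induction j)
  case 0 then show ?case by (simp add: enc_def)
next
  case (Suc j)
  let ?B = "basis_set n (2^n)"
  have jn: "Suc j < n" using Suc.prems by simp
  have IH: "fold (stp ?B x) (map (\<lambda>j. pm (sw j)) [0..<j]) (dl (0, False, 0)) = dl (j, False, enc x j)"
    using Suc by simp
  have e1: "enc x j < 2^n" using enc_lt[of x j] jn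
    by (meson less_le_trans power_increasing less_imp_le one_le_numeral Suc_lessD)
  have sB: "(j, x j, enc x j) \<in> ?B" using jn e1 unfolding basis_set_def by auto
  have swv: "sw j (j, x j, enc x j) = (Suc j, False, enc x (Suc j))"
    using enc_lt[of x j] unfolding sw_def by (simp add: enc_Suc)
  have "stp ?B x (pm (sw j)) (dl (j, False, enc x j)) = dl (Suc j, False, enc x (Suc j))"
  proof -
    have "apply_op ?B (pm (sw j)) (dl (j, x j, enc x j)) = dl (sw j (j, x j, enc x j))"
    proof (rule apply_pm[where \<sigma>="sw j"])
      show "finite ?B" by (rule finite_basis_set)
      show "(j, x j, enc x j) \<in> ?B" by (rule sB)
      show "sw j (j, x j, enc x j) \<in> ?B" by (rule sw_into[OF jn sB])
      show "\<And>a. a \<in> ?B \<Longrightarrow> sw j a = sw j (j, x j, enc x j) \<Longrightarrow> a = (j, x j, enc x j)"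
        by (metis sw_inv)
    qed
    then show ?thesis unfolding stp_def query_dl swv by simp
  qed
  then show ?case using IH by simp
qed

lemma alg_exists:
  assumes n: "0 < n" and dep: "\<And>x y. (\<forall>i<n. x i = y i) \<Longrightarrow> f x = f y"
  shows "\<exists>M Us Acc. computes n M Us Acc f"
proof -
  let ?M = "2^n :: nat"
  let ?B = "basis_set n ?M"
  define Vs where "Vs = map (\<lambda>j. pm (sw j)) [0..<n-1] @ [pm id]"
  define Us where "Us = pm id # Vs"
  define Acc :: "qbasis set" where "Acc = {(i,c,w). \<exists>y. i = n-1 \<and> c = y (n-1) \<and> w = enc y (n-1) \<and> f y}"
  have finB: "finite ?B" by (rule finite_basis_set)
  have uid: "unitary_on ?B (pm id)" by (rule unitary_pm[OF finB]) auto
  have usw: "unitary_on ?B (pm (sw j))" if "j < n - 1" for j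
    using that by (intro unitary_pm[OF finB] sw_into sw_inv) auto
  have uall: "\<forall>U\<in>set Us. unitary_on ?B U" unfolding Us_def Vs_def using uid usw by auto
  have final: "run ?B x Us = dl (n-1, x (n-1), enc x (n-1))" for x
  proof -
    have i0: "(0, False, 0) \<in> ?B" using n unfolding basis_set_def by auto
    have a0: "apply_op ?B (pm id) init_state = dl (0, False, 0)" unfolding init_dl using apply_id[OF finB i0] .
    have sB: "(n-1, x (n-1), enc x (n-1)) \<in> ?B"
      using n enc_lt[of x "n-1"] unfolding basis_set_def
      by (auto intro: less_le_trans[OF _ power_increasing])
    have "run ?B x Us = fold (stp ?B x) [pm id] (fold (stp ?B x) (map (\<lambda>j. pm (sw j)) [0..<n-1]) (dl (0, False, 0)))"
      unfolding Us_def run_fold a0 Vs_def by simp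
    also have "\<dots> = stp ?B x (pm id) (dl (n-1, False, enc x (n-1)))"
      using fold_part[of "n-1" n x] n by simp
    also have "\<dots> = dl (n-1, x (n-1), enc x (n-1))"
      unfolding stp_def query_dl using apply_id[OF finB sB] by simp
    finally show ?thesis .
  qed
  have prob: "(\<Sum>a\<in>A. (cmod (dl s a))\<^sup>2) = (if s \<in> A then 1 else 0)" if "finite A" for A s
    unfolding dl_def using that by (simp add: if_distrib[of "\<lambda>z. (cmod z)\<^sup>2"] sum.delta cong: if_cong)
  have "computes n ?M Us Acc f"
    unfolding computes_def
  proof (intro conjI allI)
    show "0 < ?M" by simp
    show "Us \<noteq> []" unfolding Us_def by simp
    show "\<forall>U\<in>set Us. unitary_on ?B U" by (rule uall)
    fix x
    define s where "s = (n-1, x (n-1), enc x (n-1))"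
    have sB: "s \<in> ?B"
      using n enc_lt[of x "n-1"] unfolding basis_set_def s_def
      by (auto intro: less_le_trans[OF _ power_increasing])
    have inacc: "s \<in> Acc \<longleftrightarrow> f x"
    proof
      assume "s \<in> Acc"
      then obtain y where y: "x (n-1) = y (n-1)" "enc x (n-1) = enc y (n-1)" "f y"
        unfolding Acc_def s_def by auto
      have "\<forall>i<n. y i = x i"
      proof (intro allI impI)
        fix i assume "i < n"
        then show "y i = x i"
        proof (cases "i < n - 1")
          case True then show ?thesis using enc_inj[OF y(2) True] by simp
        next
          case False then have "i = n - 1" using \<open>i < n\<close> by simp
          then show ?thesis using y(1) by simp
        qed
      qed
      then show "f x" using dep[of y x] y(3) by simp
    next
      assume "f x" then show "s \<in> Acc" unfolding Acc_def s_def by auto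
    qed
    show "let \<psi> = run ?B x Us in
        (if f x then (\<Sum>a\<in>?B \<inter> Acc. (cmod (\<psi> a))\<^sup>2) else (\<Sum>a\<in>?B - Acc. (cmod (\<psi> a))\<^sup>2)) \<ge> 2/3"
      unfolding Let_def final s_def[symmetric] using prob finB sB inacc by auto
  qed
  then show ?thesis by blast
qed


lemma Q_mem:
  assumes "\<exists>M Us Acc. computes n M Us Acc f"
  shows "\<exists>M Us Acc. computes n M Us Acc f \<and> Q n f = length Us - 1"
proof -
  let ?S = "{T. \<exists>m Us Acc. computes n m Us Acc f \<and> T = length Us - 1}"
  have "\<exists>T. T \<in> ?S" using assms by blast
  then have "Inf ?S \<in> ?S" unfolding Inf_nat_def by (rule LeastI_ex)
  then show ?thesis unfolding Q_def by blast
qed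

lemma eval_dep: "(\<forall>i\<in>vars \<phi>. x i = y i) \<Longrightarrow> eval \<phi> x = eval \<phi> y"
proof (induction \<phi>)
  case (Var i) then show ?case by simp
next
  case (Neg \<phi>) then show ?case by simp
next
  case (AndG \<phi>s) then show ?case by simp
next
  case (OrG \<phi>s) then show ?case by simp
qed

lemma sq_bound:
  fixes T m1 m2 :: real
  assumes m1: "m1 > 0" and m2: "m2 > 0" and T: "T \<ge> 0"
    and h: "\<And>\<alpha>. \<alpha> > 0 \<Longrightarrow> 1/18 \<le> T * (\<alpha> / m1 + 2 / (\<alpha> * m2))"
  shows "m1 * m2 \<le> 2592 * T^2"
proof -
  define \<alpha> where "\<alpha> = sqrt (2 * m1 / m2)"
  have ap: "\<alpha> > 0" unfolding \<alpha>_def using m1 m2 by simp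
  have a2: "\<alpha>^2 = 2 * m1 / m2" unfolding \<alpha>_def using m1 m2 by simp
  have eq: "2 / (\<alpha> * m2) = \<alpha> / m1"
    using ap m1 m2 a2 by (simp add: field_simps power2_eq_square)
  have "1/18 \<le> T * (2 * \<alpha> / m1)" using h[OF ap] unfolding eq by simp
  then have "m1 \<le> 36 * T * \<alpha>" using m1 by (simp add: field_simps)
  then have "m1^2 \<le> (36 * T * \<alpha>)^2" using m1 by (intro power_mono) auto
  also have "\<dots> = 1296 * T^2 * (2 * m1 / m2)" unfolding a2[symmetric] by (simp add: power_mult_distrib)
  finally have "m1^2 * m2 \<le> 2592 * T^2 * m1" using m2 by (simp add: field_simps)
  then have "m1 * (m1 * m2) \<le> m1 * (2592 * T^2)" by (simp add: power2_eq_square algebra_simps)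
  then show ?thesis using m1 by simp
qed

lemma Q_bound:
  assumes b: "(b::nat) > 0" and k: "k > 0" and kbn: "k*b \<le> n" and t: "t = k div 2"
    and fP: "\<And>P. P \<subseteq> {..<k*b} \<Longrightarrow> inj_on (\<lambda>p. p div b) P \<Longrightarrow> f (ind P) = odd (card P)"
    and ex: "\<exists>M Us Acc. computes n M Us Acc f"
  shows "real ((k - t) * b) * real (t + 1) \<le> 2592 * (real (Q n f))^2"
proof -
  obtain M Us Acc where c: "computes n M Us Acc f" and Qe: "Q n f = length Us - 1"
    using Q_mem[OF ex] by blast
  have tk: "t < k" using t k by simp
  show ?thesis
  proof (rule sq_bound)
    show "real ((k - t) * b) > 0" using tk b by simp
    show "real (t + 1) > 0" by simp
    show "real (Q n f) \<ge> 0" by simp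
    fix \<alpha> :: real assume "\<alpha> > 0"
    then show "1/18 \<le> real (Q n f) * (\<alpha> / real ((k - t) * b) + 2 / (\<alpha> * real (t + 1)))"
      using adv_instance[OF b kbn tk fP c] Qe by simp
  qed
qed


lemma div_half: "0 < (d::nat) \<Longrightarrow> d \<le> a \<Longrightarrow> real a \<le> 2 * real d * real (a div d)"
proof -
  assume d: "0 < d" "d \<le> a"
  have q: "a div d \<ge> 1" using d by (simp add: div_greater_zero_iff Suc_le_eq)
  have "a = d * (a div d) + a mod d" by simp
  moreover have "a mod d < d" using d by simp
  moreover have "d \<le> d * (a div d)" using q by simp
  ultimately have "a \<le> 2 * d * (a div d)" by linarith
  then show ?thesis by (metis of_nat_le_iff of_nat_mult of_nat_numeral)
qed

lemma kt_bound: "(k::nat) * k \<le> 4 * ((k - k div 2) * (k div 2 + 1))"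
proof (cases "even k")
  case True
  then obtain t where "k = 2 * t" by blast
  then show ?thesis by (simp add: algebra_simps)
next
  case False
  then obtain t where "k = 2 * t + 1" using oddE by blast
  then show ?thesis by (simp add: algebra_simps)
qed

lemma M_facts:
  fixes n S G :: nat
  defines "M \<equiv> min (real n) (min (sqrt (real S)) (sqrt (real n) * real G powr (1/4)))"
  shows "0 \<le> M" "M \<le> real n" "M^2 \<le> real S" "M^2 \<le> real n * sqrt (real G)"
proof -
  show M0: "0 \<le> M" unfolding M_def by simp
  show "M \<le> real n" unfolding M_def by simp
  have "M \<le> sqrt (real S)" unfolding M_def by simp
  then have "M^2 \<le> (sqrt (real S))^2" using M0 by (intro power_mono) auto
  then show "M^2 \<le> real S" by simp
  have "M \<le> sqrt (real n) * real G powr (1/4)" unfolding M_def by simp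
  then have "M^2 \<le> (sqrt (real n) * real G powr (1/4))^2" using M0 by (intro power_mono) auto
  also have "\<dots> = real n * (real G powr (1/4) * real G powr (1/4))" by (simp add: power_mult_distrib power2_eq_square)
  also have "real G powr (1/4) * real G powr (1/4) = real G powr (1/2)" by (simp add: powr_add[symmetric])
  also have "\<dots> = sqrt (real G)" by (simp add: powr_half_sqrt)
  finally show "M^2 \<le> real n * sqrt (real G)" .
qed

lemma nK_bound:
  fixes n S G k :: nat and M :: real
  assumes M0: "0 \<le> M" and Mn: "M \<le> real n" and MS: "M^2 \<le> real S" and MG: "M^2 \<le> real n * sqrt (real G)"
    and ng: "\<not> (2 * k \<le> n \<and> 4 * (k * k) \<le> S \<and> 8 * (k * k) \<le> G + 1)"
  shows "M^2 \<le> 3 * real n * real k"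
proof -
  have Msq: "M^2 \<le> M * real n" using M0 Mn by (simp add: power2_eq_square mult_left_mono)
  consider "n < 2 * k" | "S < 4 * (k * k)" | "G + 1 < 8 * (k * k)" using ng by linarith
  then show ?thesis
  proof cases
    case 1
    then have "real n < 2 * real k" by linarith
    have a: "M * real n \<le> real n * real n" by (rule mult_right_mono[OF Mn]) simp
    have b: "real n * real n \<le> real n * (2 * real k)" using \<open>real n < 2 * real k\<close> by (intro mult_left_mono) auto
    have c: "real n * (2 * real k) = 2 * (real n * real k)" "3 * real n * real k = 3 * (real n * real k)" by simp_all
    have d: "0 \<le> real n * real k" by simp
    show ?thesis using Msq a b c d by linarith
  next
    case 2
    then have "real S < 4 * real k * real k" by (metis of_nat_less_iff of_nat_mult of_nat_numeral mult.assoc)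
    then have "M^2 < (2 * real k)^2" using MS by (simp add: power2_eq_square)
    then have "M < 2 * real k" by (rule power_less_imp_less_base) simp
    then have a: "M * real n \<le> 2 * real k * real n" by (simp add: mult_right_mono)
    have c: "2 * real k * real n = 2 * (real n * real k)" "3 * real n * real k = 3 * (real n * real k)" by simp_all
    have d: "0 \<le> real n * real k" by simp
    show ?thesis using Msq a c d by linarith
  next
    case 3
    then have "real G < 8 * real k * real k" by (metis add_lessD1 of_nat_less_iff of_nat_mult of_nat_numeral mult.assoc)
    then have "real G \<le> (3 * real k)^2" by (simp add: power2_eq_square)
    then have "sqrt (real G) \<le> sqrt ((3 * real k)^2)" by (rule real_sqrt_le_mono)
    moreover have "sqrt ((3 * real k)^2) = 3 * real k" by (simp only: real_sqrt_abs)
    ultimately have "sqrt (real G) \<le> 3 * real k" by linarith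
    then have "real n * sqrt (real G) \<le> real n * (3 * real k)" by (simp add: mult_left_mono)
    then show ?thesis using MG by simp
  qed
qed


theorem theorem3:
  "\<exists>c::real. c > 0 \<and>
     (\<forall>n S G :: nat. n > 0 \<longrightarrow> S > 0 \<longrightarrow> G > 0 \<longrightarrow>
        (\<exists>\<phi>. vars \<phi> \<subseteq> {..<n} \<and> leaves \<phi> \<le> S \<and> gates \<phi> \<le> G \<and>
             real (Q n (eval \<phi>)) \<ge>
               c * min (real n) (min (sqrt (real S)) (sqrt (real n) * real G powr (1/4)))))"
proof (intro exI[of _ "1/250"] conjI allI impI)
  show "(1/250::real) > 0" by simp
  fix n S G :: nat assume n: "n > 0" and S: "S > 0" and G: "G > 0"
  define Good where "Good j \<longleftrightarrow> 2^j \<le> n \<and> 4^j \<le> S \<and> 2*4^j \<le> G+1" for j :: nat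
  have g0: "Good 0" unfolding Good_def using n S G by simp
  have gb: "\<forall>j. Good j \<longrightarrow> j \<le> n"
  proof (intro allI impI)
    fix j assume "Good j"
    then have "2^j \<le> n" unfolding Good_def by simp
    moreover have "j < 2^j" by (rule less_exp)
    ultimately show "j \<le> n" by linarith
  qed
  define j0 where "j0 = (GREATEST j. Good j)"
  have gj0: "Good j0" unfolding j0_def by (rule GreatestI_nat[where P=Good, OF g0]) (use gb in blast)
  have ngj0: "\<not> Good (Suc j0)"
  proof
    assume "Good (Suc j0)"
    then have "Suc j0 \<le> j0" unfolding j0_def by (rule Greatest_le_nat[where P=Good]) (use gb in blast)
    then show False by simp
  qed
  define k where "k = (2::nat)^j0"
  have k4: "(4::nat)^j0 = k * k" unfolding k_def by (metis power_mult_distrib num_double numeral_times_numeral)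
  have kpos: "k > 0" unfolding k_def by simp
  have kn: "k \<le> n" and kkS: "k * k \<le> S" and kkG: "2 * (k * k) \<le> G + 1"
    using gj0 unfolding Good_def k_def[symmetric] k4 by auto
  have ng: "\<not> (2 * k \<le> n \<and> 4 * (k * k) \<le> S \<and> 8 * (k * k) \<le> G + 1)"
    using ngj0 unfolding Good_def k_def[symmetric] by (simp add: k4 k_def)
  define b where "b = min (n div k) (S div (k * k))"
  have bpos: "b > 0" unfolding b_def using kn kkS kpos by (simp add: div_greater_zero_iff)
  have kbn: "k * b \<le> n" unfolding b_def
    by (metis min.cobounded1 mult.commute order.trans div_times_less_eq_dividend mult_le_mono2)
  have kkbS: "k * k * b \<le> S" unfolding b_def
    by (metis min.cobounded2 mult.commute order.trans div_times_less_eq_dividend mult_le_mono2)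
  define \<phi> where "\<phi> = par j0 (orblk b) 0"
  have vphi: "vars \<phi> \<subseteq> {..<k*b}"
  proof
    fix v assume "v \<in> vars \<phi>"
    then obtain i where i: "i < k" "v \<in> vars (orblk b i)"
      using vars_par[of j0 "orblk b" 0] unfolding \<phi>_def k_def by auto
    then obtain p where "p < b" "v = i * b + p" unfolding vars_orblk by auto
    then show "v \<in> {..<k*b}" using blk_lt i(1) by simp
  qed
  then have vphin: "vars \<phi> \<subseteq> {..<n}" using kbn by auto
  have lphi: "leaves \<phi> = k * k * b" unfolding \<phi>_def using leaves_par[of "orblk b" b j0 0] leaves_orblk k4 by simp
  have gphi: "gates \<phi> + 1 = 2 * (k * k)" unfolding \<phi>_def using gates_par[of "orblk b" j0 0] gates_orblk k4 by simp
  have fP: "eval \<phi> (ind P) = odd (card P)" if "P \<subseteq> {..<k*b}" "inj_on (\<lambda>p. p div b) P" for P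
    unfolding \<phi>_def eval_par eval_orblk k_def[symmetric] using count_blocks[OF bpos that] by simp
  have dep: "\<And>x y. (\<forall>i<n. x i = y i) \<Longrightarrow> eval \<phi> x = eval \<phi> y"
    using vphin by (intro eval_dep) auto
  have ex: "\<exists>M Us Acc. computes n M Us Acc (eval \<phi>)" by (rule alg_exists[OF n dep])
  define t where "t = k div 2"
  define T where "T = real (Q n (eval \<phi>))"
  have QB: "real ((k - t) * b) * real (t + 1) \<le> 2592 * T^2"
    unfolding T_def by (rule Q_bound[OF bpos kpos kbn t_def fP ex])
  have "k * k * b \<le> 4 * ((k - t) * b * (t + 1))"
    using mult_le_mono1[OF kt_bound[of k], of b] unfolding t_def by (simp add: algebra_simps)
  then have A: "real (k * k * b) \<le> 4 * (real ((k - t) * b) * real (t + 1))"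
    by (metis of_nat_le_iff of_nat_mult of_nat_numeral)
  define M where "M = min (real n) (min (sqrt (real S)) (sqrt (real n) * real G powr (1/4)))"
  have MF: "0 \<le> M" "M \<le> real n" "M^2 \<le> real S" "M^2 \<le> real n * sqrt (real G)"
    unfolding M_def using M_facts by auto
  have nK: "M^2 \<le> 3 * real n * real k" by (rule nK_bound[OF MF ng])
  have B: "min (real n * real k) (real S) \<le> 2 * real (k * k * b)"
  proof (cases "n div k \<le> S div (k * k)")
    case True
    then have "b = n div k" unfolding b_def by simp
    then have "real n \<le> 2 * real k * real b" using div_half[OF kpos kn] by simp
    then have "real n * real k \<le> 2 * real k * real b * real k" by (simp add: mult_right_mono)
    then show ?thesis by (simp add: algebra_simps)
  next
    case False
    then have "b = S div (k * k)" unfolding b_def by simp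
    then have "real S \<le> 2 * real (k * k) * real b" using div_half[of "k*k" S] kpos kkS by simp
    then show ?thesis by (simp add: algebra_simps)
  qed
  have "M^2 \<le> 3 * min (real n * real k) (real S)" using nK MF(3) by (simp add: min_def algebra_simps)
  also have "\<dots> \<le> 6 * real (k * k * b)" using B by linarith
  also have "\<dots> \<le> 62208 * T^2" using A QB by linarith
  also have "\<dots> \<le> (250 * T)^2" by (simp add: power_mult_distrib)
  finally have "M \<le> 250 * T" by (rule power2_le_imp_le) (simp add: T_def)
  then have "1/250 * M \<le> T" by simp
  then show "\<exists>\<phi>. vars \<phi> \<subseteq> {..<n} \<and> leaves \<phi> \<le> S \<and> gates \<phi> \<le> G \<and>
             real (Q n (eval \<phi>)) \<ge> 1/250 * min (real n) (min (sqrt (real S)) (sqrt (real n) * real G powr (1/4)))"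
    using vphin lphi gphi kkbS kkG unfolding M_def T_def by (intro exI[of _ \<phi>]) auto
qed


end
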